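(* Let $G$ be a connected Lie group, $\Gamma$ a discrete subgroup of $H=PSL(2,\mathbb{R})\times G$ and $X=\Gamma\backslash H$. If $\Gamma$ contains a semi-parabolic element, then there is a point $x\in X$ whose positive semi-orbit under $D^+$ diverges: for every sequence $d_n=\operatorname{diag}(\lambda_n,\lambda_n^{-1})\in D^+$ with $\lambda_n\to+\infty$, the sequence $x d_n$ has no convergent subsequence in $X$.
   Context: $D^+=\{\begin{pmatrix}\lambda&0\\0&\lambda^{-1}\end{pmatrix}:\lambda>1\}\subset PSL(2,\mathbb{R})$ acts on $X$ on the right by $\Gamma(f,g)d=\Gamma(fd,g)$. An element $(f,g)\in PSL(2,\mathbb{R})\times G$ is semi-parabolic if $f$ is conjugate in $PSL(2,\mathbb{R})$ to an element $u\neq Id$ of $U=\{\begin{pmatrix}1&t\\0&1\end{pmatrix}\}$. *)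

theory Defs
  imports "HOL-Analysis.Analysis" "HOL-Algebra.Coset"
begin

definition quotient_topology :: "'a topology \<Rightarrow> ('a \<Rightarrow> 'b) \<Rightarrow> 'b topology" where
  "quotient_topology X f =
     topology (\<lambda>U. U \<subseteq> f ` topspace X \<and> openin X {x \<in> topspace X. f x \<in> U})"

definition topological_group :: "('g, 'b) monoid_scheme \<Rightarrow> 'g topology \<Rightarrow> bool" where
  "topological_group G T \<longleftrightarrow>
     group G \<and> topspace T = carrier G \<and>
     continuous_map (prod_topology T T) T (\<lambda>(x, y). x \<otimes>\<^bsub>G\<^esub> y) \<and>
     continuous_map T T (\<lambda>x. inv\<^bsub>G\<^esub> x)"

text \<open>No small subgroups: some neighbourhood of the identity contains no nontrivial subgroup.
  (Gleason--Montgomery--Zippin: a locally compact Hausdorff group is a Lie group iff it has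
  no small subgroups.)\<close>
definition no_small_subgroups :: "('g, 'b) monoid_scheme \<Rightarrow> 'g topology \<Rightarrow> bool" where
  "no_small_subgroups G T \<longleftrightarrow>
     (\<exists>U. openin T U \<and> \<one>\<^bsub>G\<^esub> \<in> U \<and>
          (\<forall>K. subgroup K G \<and> K \<subseteq> U \<longrightarrow> K = {\<one>\<^bsub>G\<^esub>}))"

definition lie_group :: "('g, 'b) monoid_scheme \<Rightarrow> 'g topology \<Rightarrow> bool" where
  "lie_group G T \<longleftrightarrow> topological_group G T \<and> Hausdorff_space T \<and>
     locally_compact_space T \<and> no_small_subgroups G T"

type_synonym mat2 = "real^2^2"

definition SL2 :: "mat2 set" where
  "SL2 = {A. det A = 1}"

definition psl_class :: "mat2 \<Rightarrow> mat2 set" where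
  "psl_class A = {A, - A}"

definition PSL2 :: "mat2 set monoid" where
  "PSL2 = \<lparr> carrier = psl_class ` SL2,
            mult = (\<lambda>P Q. {a ** b | a b. a \<in> P \<and> b \<in> Q}),
            one = psl_class (mat 1) \<rparr>"

definition PSL2_top :: "mat2 set topology" where
  "PSL2_top = quotient_topology (subtopology euclidean SL2) psl_class"

definition mat2_of :: "real \<Rightarrow> real \<Rightarrow> real \<Rightarrow> real \<Rightarrow> mat2" where
  "mat2_of a b c d = (\<chi> i j. if i = 1 then (if j = 1 then a else b) else (if j = 1 then c else d))"

definition psl_diag :: "real \<Rightarrow> mat2 set" where
  "psl_diag l = psl_class (mat2_of l 0 0 (1 / l))"

definition psl_unip :: "real \<Rightarrow> mat2 set" where
  "psl_unip t = psl_class (mat2_of 1 t 0 1)"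

definition D_plus :: "mat2 set set" where
  "D_plus = {psl_diag l | l. l > 1}"

definition U_group :: "mat2 set set" where
  "U_group = range psl_unip"

definition Hgrp :: "('g, 'b) monoid_scheme \<Rightarrow> (mat2 set \<times> 'g) monoid" where
  "Hgrp G = PSL2 \<times>\<times> G"

definition Htop :: "'g topology \<Rightarrow> (mat2 set \<times> 'g) topology" where
  "Htop T = prod_topology PSL2_top T"

definition discrete_subgroup ::
    "('a, 'b) monoid_scheme \<Rightarrow> 'a topology \<Rightarrow> 'a set \<Rightarrow> bool" where
  "discrete_subgroup H T \<Gamma> \<longleftrightarrow> subgroup \<Gamma> H \<and>
     (\<forall>\<gamma>\<in>\<Gamma>. \<exists>V. openin T V \<and> V \<inter> \<Gamma> = {\<gamma>})"

definition semi_parabolic :: "('g, 'b) monoid_scheme \<Rightarrow> mat2 set \<times> 'g \<Rightarrow> bool" where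
  "semi_parabolic G fg \<longleftrightarrow> fg \<in> carrier (Hgrp G) \<and>
     (\<exists>c\<in>carrier PSL2. \<exists>u\<in>U_group. u \<noteq> \<one>\<^bsub>PSL2\<^esub> \<and>
        fst fg = c \<otimes>\<^bsub>PSL2\<^esub> u \<otimes>\<^bsub>PSL2\<^esub> inv\<^bsub>PSL2\<^esub> c)"

definition Xspace :: "('g, 'b) monoid_scheme \<Rightarrow> (mat2 set \<times> 'g) set \<Rightarrow> (mat2 set \<times> 'g) set set" where
  "Xspace G \<Gamma> = (\<lambda>h. \<Gamma> #>\<^bsub>Hgrp G\<^esub> h) ` carrier (Hgrp G)"

definition Xtop :: "('g, 'b) monoid_scheme \<Rightarrow> 'g topology \<Rightarrow> (mat2 set \<times> 'g) set
                     \<Rightarrow> (mat2 set \<times> 'g) set topology" where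
  "Xtop G T \<Gamma> = quotient_topology (Htop T) (\<lambda>h. \<Gamma> #>\<^bsub>Hgrp G\<^esub> h)"

definition Xact :: "('g, 'b) monoid_scheme \<Rightarrow> (mat2 set \<times> 'g) set \<Rightarrow> mat2 set \<Rightarrow> (mat2 set \<times> 'g) set" where
  "Xact G x d = x #>\<^bsub>Hgrp G\<^esub> (d, \<one>\<^bsub>G\<^esub>)"

end

theory Submission
  imports Defs
begin

lemma qt_istop: "istopology (\<lambda>U. U \<subseteq> f ` topspace X \<and> openin X {x \<in> topspace X. f x \<in> U})"
  unfolding istopology_def
proof (rule conjI; intro allI impI)
  fix S T assume ST: "S \<subseteq> f ` topspace X \<and> openin X {x \<in> topspace X. f x \<in> S}"
    "T \<subseteq> f ` topspace X \<and> openin X {x \<in> topspace X. f x \<in> T}"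
  then show "S \<inter> T \<subseteq> f ` topspace X \<and> openin X {x \<in> topspace X. f x \<in> S \<inter> T}"
  proof -
    have "{x \<in> topspace X. f x \<in> S \<inter> T} = {x \<in> topspace X. f x \<in> S} \<inter> {x \<in> topspace X. f x \<in> T}" by auto
    then show ?thesis using ST by auto
  qed
next
  fix K assume K: "\<forall>U\<in>K. U \<subseteq> f ` topspace X \<and> openin X {x \<in> topspace X. f x \<in> U}"
  have "{x \<in> topspace X. f x \<in> \<Union>K} = \<Union>((\<lambda>U. {x \<in> topspace X. f x \<in> U}) ` K)" by auto
  moreover have "openin X (\<Union>((\<lambda>U. {x \<in> topspace X. f x \<in> U}) ` K))"
    using K by (intro openin_Union) auto
  ultimately show "\<Union>K \<subseteq> f ` topspace X \<and> openin X {x \<in> topspace X. f x \<in> \<Union>K}"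
    using K by auto
qed

lemma openin_qt: "openin (quotient_topology X f) U \<longleftrightarrow> U \<subseteq> f ` topspace X \<and> openin X {x \<in> topspace X. f x \<in> U}"
  unfolding quotient_topology_def using qt_istop[of f X] by (simp del: qt_istop)

lemma topspace_qt: "topspace (quotient_topology X f) = f ` topspace X"
proof -
  have "openin (quotient_topology X f) (f ` topspace X)"
    unfolding openin_qt proof
    have "{x \<in> topspace X. f x \<in> f ` topspace X} = topspace X" by auto
    then show "openin X {x \<in> topspace X. f x \<in> f ` topspace X}" by simp
  qed auto
  then have "f ` topspace X \<subseteq> topspace (quotient_topology X f)" by (rule openin_subset)
  moreover have "topspace (quotient_topology X f) \<subseteq> f ` topspace X"
    using openin_qt[of X f "topspace (quotient_topology X f)"] by auto
  ultimately show ?thesis by auto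
qed

lemma m2_nth [simp]: "mat2_of a b c d $ 1 $ 1 = a" "mat2_of a b c d $ 1 $ 2 = b"
  "mat2_of a b c d $ 2 $ 1 = c" "mat2_of a b c d $ 2 $ 2 = d"
  by (simp_all add: mat2_of_def)


definition adj2 :: "mat2 \<Rightarrow> mat2" where
  "adj2 A = mat2_of (A$2$2) (-(A$1$2)) (-(A$2$1)) (A$1$1)"

definition unipM :: "real \<Rightarrow> mat2" where "unipM s = mat2_of 1 s 0 1"

lemma mat2_eq: "M = mat2_of (M$1$1) (M$1$2) (M$2$1) (M$2$2)"
  by (simp add: vec_eq_iff forall_2 mat2_of_def)

lemma mat2_cases: obtains a b c d where "M = mat2_of a b c d"
  using mat2_eq by blast

lemma mat2_mult: "mat2_of a b c d ** mat2_of e f g h = mat2_of (a*e+b*g) (a*f+b*h) (c*e+d*g) (c*f+d*h)"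
  by (simp add: vec_eq_iff forall_2 matrix_matrix_mult_def sum_2 mat2_of_def)

lemma mat2_neg: "- mat2_of a b c d = mat2_of (-a) (-b) (-c) (-d)"
  by (simp add: vec_eq_iff forall_2 mat2_of_def)

lemma mat2_one: "mat 1 = mat2_of 1 0 0 1"
  by (simp add: vec_eq_iff forall_2 mat2_of_def mat_def)

lemma mat2_det: "det (mat2_of a b c d) = a*d - b*c"
  by (simp add: det_2)

lemma mat2_inj: "mat2_of a b c d = mat2_of a' b' c' d' \<longleftrightarrow> a=a' \<and> b=b' \<and> c=c' \<and> d=d'"
  by (metis m2_nth)

lemma adj2_mat2: "adj2 (mat2_of a b c d) = mat2_of d (-b) (-c) a"
  by (simp add: adj2_def)

lemmas m2simps = mat2_mult mat2_neg mat2_one mat2_det mat2_inj adj2_mat2 unipM_def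

lemma mult_neg_l: "(- (A::mat2)) ** (B::mat2) = - (A ** B)"
  by (cases A rule: mat2_cases, cases B rule: mat2_cases) (simp add: m2simps)
lemma mult_neg_r: "(A::mat2) ** (- B::mat2) = - (A ** B)"
  by (cases A rule: mat2_cases, cases B rule: mat2_cases) (simp add: m2simps)

lemma SL2_mult: "A \<in> SL2 \<Longrightarrow> B \<in> SL2 \<Longrightarrow> A ** B \<in> SL2"
  by (simp add: SL2_def det_mul)
lemma SL2_one: "mat 1 \<in> SL2" by (simp add: SL2_def)
lemma SL2_adj: "A \<in> SL2 \<Longrightarrow> adj2 A \<in> SL2"
  by (cases A rule: mat2_cases) (simp add: SL2_def m2simps algebra_simps)
lemma SL2_neg: "A \<in> SL2 \<Longrightarrow> - A \<in> SL2"
  by (cases A rule: mat2_cases) (simp add: SL2_def m2simps algebra_simps)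
lemma adj2_l: "A \<in> SL2 \<Longrightarrow> adj2 A ** A = mat 1"
  by (cases A rule: mat2_cases) (simp add: SL2_def m2simps algebra_simps)
lemma adj2_r: "A \<in> SL2 \<Longrightarrow> A ** adj2 A = mat 1"
  by (cases A rule: mat2_cases) (simp add: SL2_def m2simps algebra_simps)

lemma psl_class_eq: "psl_class A = psl_class B \<longleftrightarrow> B = A \<or> B = - A"
  by (auto simp: psl_class_def doubleton_eq_iff)

lemma psl_mult: "psl_class A \<otimes>\<^bsub>PSL2\<^esub> psl_class B = psl_class (A ** B)"
proof -
  have "{a ** b |a b. a \<in> {A, - A} \<and> b \<in> {B, - B}} = {A ** B, - (A ** B)}"
  proof (intro Set.set_eqI iffI)
    fix x assume "x \<in> {a ** b |a b. a \<in> {A, - A} \<and> b \<in> {B, - B}}"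
    then show "x \<in> {A ** B, - (A ** B)}" by (auto simp: mult_neg_l mult_neg_r)
  next
    fix x assume "x \<in> {A ** B, - (A ** B)}"
    then show "x \<in> {a ** b |a b. a \<in> {A, - A} \<and> b \<in> {B, - B}}"
    proof
      assume "x = A ** B" then show ?thesis by blast
    next
      assume "x \<in> {- (A ** B)}"
      then have "x = (- A) ** B" by (simp add: mult_neg_l)
      then show ?thesis by blast
    qed
  qed
  then show ?thesis unfolding PSL2_def psl_class_def by simp
qed

lemma carrier_PSL2: "carrier PSL2 = psl_class ` SL2" by (simp add: PSL2_def)
lemma one_PSL2: "\<one>\<^bsub>PSL2\<^esub> = psl_class (mat 1)" by (simp add: PSL2_def)

lemma group_PSL2: "group PSL2"
proof (rule groupI)
  fix x y assume "x \<in> carrier PSL2" "y \<in> carrier PSL2"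
  then show "x \<otimes>\<^bsub>PSL2\<^esub> y \<in> carrier PSL2"
    by (auto simp: carrier_PSL2 psl_mult SL2_mult)
next
  show "\<one>\<^bsub>PSL2\<^esub> \<in> carrier PSL2" by (simp add: carrier_PSL2 one_PSL2 SL2_one)
next
  fix x y z assume "x \<in> carrier PSL2" "y \<in> carrier PSL2" "z \<in> carrier PSL2"
  then show "x \<otimes>\<^bsub>PSL2\<^esub> y \<otimes>\<^bsub>PSL2\<^esub> z = x \<otimes>\<^bsub>PSL2\<^esub> (y \<otimes>\<^bsub>PSL2\<^esub> z)"
    by (auto simp: carrier_PSL2 psl_mult matrix_mul_assoc)
next
  fix x assume "x \<in> carrier PSL2"
  then show "\<one>\<^bsub>PSL2\<^esub> \<otimes>\<^bsub>PSL2\<^esub> x = x"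
    by (auto simp: carrier_PSL2 psl_mult one_PSL2 matrix_mul_lid)
next
  fix x assume "x \<in> carrier PSL2"
  then obtain A where A: "A \<in> SL2" "x = psl_class A" by (auto simp: carrier_PSL2)
  then show "\<exists>y\<in>carrier PSL2. y \<otimes>\<^bsub>PSL2\<^esub> x = \<one>\<^bsub>PSL2\<^esub>"
    by (intro bexI[of _ "psl_class (adj2 A)"]) (auto simp: carrier_PSL2 psl_mult one_PSL2 adj2_l SL2_adj)
qed

lemma psl_inv: "A \<in> SL2 \<Longrightarrow> inv\<^bsub>PSL2\<^esub> (psl_class A) = psl_class (adj2 A)"
  by (rule group.inv_equality[OF group_PSL2]) (auto simp: carrier_PSL2 psl_mult one_PSL2 adj2_l SL2_adj)



lemma tendsto_mat2_of [tendsto_intros]: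
  assumes "(a \<longlongrightarrow> a0) F" "(b \<longlongrightarrow> b0) F" "(c \<longlongrightarrow> c0) F" "(d \<longlongrightarrow> d0) F"
  shows "((\<lambda>x. mat2_of (a x) (b x) (c x) (d x)) \<longlongrightarrow> mat2_of a0 b0 c0 d0) F"
proof (rule vec_tendstoI)
  fix i :: 2
  show "((\<lambda>x. mat2_of (a x) (b x) (c x) (d x) $ i) \<longlongrightarrow> mat2_of a0 b0 c0 d0 $ i) F"
  proof (rule vec_tendstoI)
    fix j :: 2
    show "((\<lambda>x. mat2_of (a x) (b x) (c x) (d x) $ i $ j) \<longlongrightarrow> mat2_of a0 b0 c0 d0 $ i $ j) F"
      using assms exhaust_2[of i] exhaust_2[of j] by auto
  qed
qed

lemma mat2_mult_expand: "(A::mat2) ** B = mat2_of (A$1$1*B$1$1+A$1$2*B$2$1) (A$1$1*B$1$2+A$1$2*B$2$2)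
   (A$2$1*B$1$1+A$2$2*B$2$1) (A$2$1*B$1$2+A$2$2*B$2$2)"
  by (subst mat2_eq[of A], subst mat2_eq[of B], simp add: mat2_mult)

lemma tendsto_mat2_mult [tendsto_intros]:
  fixes f g :: "'a \<Rightarrow> mat2"
  assumes "(f \<longlongrightarrow> a) F" "(g \<longlongrightarrow> b) F"
  shows "((\<lambda>x. f x ** g x) \<longlongrightarrow> a ** b) F"
  unfolding mat2_mult_expand[of "f _"] mat2_mult_expand[of a]
  by (intro tendsto_intros assms)

lemma tendsto_adj2 [tendsto_intros]:
  fixes f :: "'a \<Rightarrow> mat2"
  assumes "(f \<longlongrightarrow> a) F"
  shows "((\<lambda>x. adj2 (f x)) \<longlongrightarrow> adj2 a) F"
  unfolding adj2_def by (intro tendsto_intros assms)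

lemma tendsto_unipM [tendsto_intros]:
  assumes "(f \<longlongrightarrow> a) F"
  shows "((\<lambda>x. unipM (f x)) \<longlongrightarrow> unipM a) F"
  unfolding unipM_def by (intro tendsto_intros assms)

lemma topspace_PSL2: "topspace PSL2_top = carrier PSL2"
  by (simp add: PSL2_top_def topspace_qt carrier_PSL2)

lemma openin_PSL2: "openin PSL2_top U \<longleftrightarrow> U \<subseteq> carrier PSL2 \<and> openin (top_of_set SL2) {M \<in> SL2. psl_class M \<in> U}"
  by (simp add: PSL2_top_def openin_qt carrier_PSL2)

lemma cont_lmult_SL2: "continuous_map (top_of_set SL2) (top_of_set SL2) (\<lambda>M. A ** M)" if "A \<in> SL2"
proof -
  have "continuous_on SL2 (\<lambda>M. A ** M)"
    unfolding continuous_on_def by (intro ballI tendsto_intros)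
  then show ?thesis using that
    by (auto intro!: continuous_map_into_subtopology simp: SL2_mult)
qed

lemma cont_lmult_PSL2:
  assumes "a \<in> carrier PSL2"
  shows "continuous_map PSL2_top PSL2_top (\<lambda>p. a \<otimes>\<^bsub>PSL2\<^esub> p)"
proof -
  obtain A where A: "A \<in> SL2" "a = psl_class A" using assms by (auto simp: carrier_PSL2)
  interpret P: group PSL2 by (rule group_PSL2)
  show ?thesis unfolding continuous_map_def
  proof (intro conjI allI impI)
    show "(\<lambda>p. a \<otimes>\<^bsub>PSL2\<^esub> p) \<in> topspace PSL2_top \<rightarrow> topspace PSL2_top"
      using assms by (auto simp: topspace_PSL2)
  next
    fix U assume U: "openin PSL2_top U"
    let ?P = "{N \<in> SL2. psl_class N \<in> U}"
    have P: "openin (top_of_set SL2) ?P" using U by (simp add: openin_PSL2)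
    have "openin (top_of_set SL2) {M \<in> topspace (top_of_set SL2). A ** M \<in> ?P}"
      by (rule openin_continuous_map_preimage[OF cont_lmult_SL2[OF A(1)] P])
    moreover have "{M \<in> topspace (top_of_set SL2). A ** M \<in> ?P} =
       {M \<in> SL2. psl_class M \<in> {x \<in> topspace PSL2_top. a \<otimes>\<^bsub>PSL2\<^esub> x \<in> U}}"
      using A by (auto simp: topspace_PSL2 psl_mult SL2_mult carrier_PSL2)
    ultimately show "openin PSL2_top {x \<in> topspace PSL2_top. a \<otimes>\<^bsub>PSL2\<^esub> x \<in> U}"
      by (simp add: openin_PSL2 topspace_PSL2)
  qed
qed

lemma dist_pair_le: "dist (a,b) (c,d) \<le> dist a c + dist b d"
  using sqrt_sum_squares_le_sum_abs[of "dist a c" "dist b d"] by (simp add: dist_Pair_Pair)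



lemma cont_lmult_top:
  assumes "topological_group G T" "b \<in> carrier G"
  shows "continuous_map T T (\<lambda>x. b \<otimes>\<^bsub>G\<^esub> x)"
proof -
  have m: "continuous_map (prod_topology T T) T (\<lambda>(x, y). x \<otimes>\<^bsub>G\<^esub> y)"
   and tp: "topspace T = carrier G"
    using assms(1) by (auto simp: topological_group_def)
  have "continuous_map T (prod_topology T T) (\<lambda>x. (b, x))"
    using assms(2) tp by (intro continuous_map_pairedI) (auto simp: continuous_map_id[unfolded id_def])
  from continuous_map_compose[OF this m] show ?thesis by (simp add: o_def)
qed

lemma group_Hgrp: "group G \<Longrightarrow> group (Hgrp G)"
  unfolding Hgrp_def by (intro DirProd_group group_PSL2)

lemma carrier_Hgrp: "carrier (Hgrp G) = carrier PSL2 \<times> carrier G"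
  by (simp add: Hgrp_def)

lemma topspace_Htop: "topological_group G T \<Longrightarrow> topspace (Htop T) = carrier (Hgrp G)"
  by (simp add: Htop_def topspace_PSL2 carrier_Hgrp topological_group_def)

lemma cont_lmult_H:
  assumes "topological_group G T" "c \<in> carrier (Hgrp G)"
  shows "continuous_map (Htop T) (Htop T) (\<lambda>h. c \<otimes>\<^bsub>Hgrp G\<^esub> h)"
proof -
  obtain c1 c2 where c: "c = (c1, c2)" "c1 \<in> carrier PSL2" "c2 \<in> carrier G"
    using assms(2) by (auto simp: carrier_Hgrp)
  have "continuous_map (Htop T) (Htop T) (\<lambda>h. (c1 \<otimes>\<^bsub>PSL2\<^esub> fst h, c2 \<otimes>\<^bsub>G\<^esub> snd h))"
    unfolding Htop_def
    by (intro continuous_map_pairedI continuous_map_compose[OF continuous_map_fst, unfolded o_def]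
         continuous_map_compose[OF continuous_map_snd, unfolded o_def]
         cont_lmult_PSL2 cont_lmult_top assms(1) c)
  then show ?thesis by (simp add: Hgrp_def c mult_DirProd')
qed

lemma openin_X:
  assumes tg: "topological_group G T" and sg: "subgroup \<Gamma> (Hgrp G)"
    and W: "openin (Htop T) W"
  shows "openin (Xtop G T \<Gamma>) ((\<lambda>h. \<Gamma> #>\<^bsub>Hgrp G\<^esub> h) ` W)"
proof -
  interpret H: group "Hgrp G" using tg by (intro group_Hgrp) (simp add: topological_group_def)
  have tsp: "topspace (Htop T) = carrier (Hgrp G)" by (rule topspace_Htop[OF tg])
  have Wc: "W \<subseteq> carrier (Hgrp G)" using openin_subset[OF W] tsp by simp
  have Gc: "\<Gamma> \<subseteq> carrier (Hgrp G)" using sg by (rule subgroup.subset)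
  let ?q = "\<lambda>h. \<Gamma> #>\<^bsub>Hgrp G\<^esub> h"
  have eq: "{h \<in> topspace (Htop T). ?q h \<in> ?q ` W} =
      (\<Union>\<gamma>\<in>\<Gamma>. {h \<in> topspace (Htop T). inv\<^bsub>Hgrp G\<^esub> \<gamma> \<otimes>\<^bsub>Hgrp G\<^esub> h \<in> W})"
  proof (intro Set.set_eqI iffI)
    fix h assume "h \<in> {h \<in> topspace (Htop T). ?q h \<in> ?q ` W}"
    then obtain w where h: "h \<in> carrier (Hgrp G)" and w: "w \<in> W" "?q h = ?q w" using tsp by auto
    have "h \<in> ?q w" using H.rcos_self[OF h sg] w by simp
    then obtain \<gamma> where g: "\<gamma> \<in> \<Gamma>" "h = \<gamma> \<otimes>\<^bsub>Hgrp G\<^esub> w" unfolding r_coset_def by auto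
    have "inv\<^bsub>Hgrp G\<^esub> \<gamma> \<otimes>\<^bsub>Hgrp G\<^esub> h = w"
    proof -
      have "\<gamma> \<in> carrier (Hgrp G)" "w \<in> carrier (Hgrp G)" using g Gc Wc w(1) by auto
      then show ?thesis using g(2) by (simp add: H.m_assoc[symmetric])
    qed
    then show "h \<in> (\<Union>\<gamma>\<in>\<Gamma>. {h \<in> topspace (Htop T). inv\<^bsub>Hgrp G\<^esub> \<gamma> \<otimes>\<^bsub>Hgrp G\<^esub> h \<in> W})"
      using g(1) h w(1) tsp by auto
  next
    fix h assume "h \<in> (\<Union>\<gamma>\<in>\<Gamma>. {h \<in> topspace (Htop T). inv\<^bsub>Hgrp G\<^esub> \<gamma> \<otimes>\<^bsub>Hgrp G\<^esub> h \<in> W})"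
    then obtain \<gamma> where g: "\<gamma> \<in> \<Gamma>" "h \<in> carrier (Hgrp G)" "inv\<^bsub>Hgrp G\<^esub> \<gamma> \<otimes>\<^bsub>Hgrp G\<^esub> h \<in> W"
      using tsp by auto
    let ?w = "inv\<^bsub>Hgrp G\<^esub> \<gamma> \<otimes>\<^bsub>Hgrp G\<^esub> h"
    have "h = \<gamma> \<otimes>\<^bsub>Hgrp G\<^esub> ?w" using g Gc by (auto simp: H.m_assoc[symmetric])
    then have "h \<in> ?q ?w" using g unfolding r_coset_def by auto
    moreover have "?w \<in> carrier (Hgrp G)" using g Wc by auto
    ultimately have "?q ?w = ?q h" using H.repr_independence[OF _ _ sg] by blast
    then show "h \<in> {h \<in> topspace (Htop T). ?q h \<in> ?q ` W}"
      using g tsp by (auto intro!: image_eqI[of _ _ ?w])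
  qed
  have "openin (Htop T) (\<Union>\<gamma>\<in>\<Gamma>. {h \<in> topspace (Htop T). inv\<^bsub>Hgrp G\<^esub> \<gamma> \<otimes>\<^bsub>Hgrp G\<^esub> h \<in> W})"
    using Gc by (intro openin_Union) (auto intro!: openin_continuous_map_preimage[OF cont_lmult_H[OF tg] W])
  then show ?thesis unfolding Xtop_def openin_qt using eq Wc tsp by auto
qed

lemma topspace_Xtop: "topspace (Xtop G T \<Gamma>) = (\<lambda>h. \<Gamma> #>\<^bsub>Hgrp G\<^esub> h) ` topspace (Htop T)"
  by (simp add: Xtop_def topspace_qt)



lemma tg_mult_cont:
  assumes "topological_group G T" "continuous_map X T f" "continuous_map X T f'"
  shows "continuous_map X T (\<lambda>x. f x \<otimes>\<^bsub>G\<^esub> f' x)"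
proof -
  have m: "continuous_map (prod_topology T T) T (\<lambda>(x, y). x \<otimes>\<^bsub>G\<^esub> y)"
    using assms(1) by (auto simp: topological_group_def)
  from continuous_map_compose[OF continuous_map_pairedI[OF assms(2,3)] m] show ?thesis by (simp add: o_def)
qed

lemma tg_inv_cont:
  assumes "topological_group G T" "continuous_map X T f"
  shows "continuous_map X T (\<lambda>x. inv\<^bsub>G\<^esub> f x)"
proof -
  have m: "continuous_map T T (\<lambda>x. inv\<^bsub>G\<^esub> x)"
    using assms(1) by (auto simp: topological_group_def)
  from continuous_map_compose[OF assms(2) m] show ?thesis by (simp add: o_def)
qed

lemma G_part:
  assumes tg: "topological_group G T" and g: "g \<in> carrier G" and y: "y \<in> carrier G"
    and V: "openin T V" "\<one>\<^bsub>G\<^esub> \<in> V"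
  shows "\<exists>W. openin T W \<and> y \<in> W \<and> (\<forall>a\<in>W. \<forall>b\<in>W.
     inv\<^bsub>G\<^esub> (a \<otimes>\<^bsub>G\<^esub> g \<otimes>\<^bsub>G\<^esub> inv\<^bsub>G\<^esub> a) \<otimes>\<^bsub>G\<^esub> (b \<otimes>\<^bsub>G\<^esub> g \<otimes>\<^bsub>G\<^esub> inv\<^bsub>G\<^esub> b) \<in> V)"
proof -
  interpret G: group G using tg by (simp add: topological_group_def)
  have tsp: "topspace T = carrier G" using tg by (simp add: topological_group_def)
  let ?k = "\<lambda>a. a \<otimes>\<^bsub>G\<^esub> g \<otimes>\<^bsub>G\<^esub> inv\<^bsub>G\<^esub> a"
  let ?phi = "\<lambda>p. inv\<^bsub>G\<^esub> (?k (fst p)) \<otimes>\<^bsub>G\<^esub> ?k (snd p)"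
  have cg: "continuous_map (prod_topology T T) T (\<lambda>p. g)" using g tsp by simp
  have ck: "continuous_map X T (\<lambda>x. ?k (f x))" if "continuous_map X T f" for X f
  proof -
    have "continuous_map X T (\<lambda>x. g)" using g tsp by simp
    then have "continuous_map X T (\<lambda>x. f x \<otimes>\<^bsub>G\<^esub> g)" by (rule tg_mult_cont[OF tg that])
    moreover have "continuous_map X T (\<lambda>x. inv\<^bsub>G\<^esub> f x)" by (rule tg_inv_cont[OF tg that])
    ultimately show ?thesis by (rule tg_mult_cont[OF tg])
  qed
  have c: "continuous_map (prod_topology T T) T ?phi"
    by (rule tg_mult_cont[OF tg tg_inv_cont[OF tg ck[OF continuous_map_fst]] ck[OF continuous_map_snd]])
  let ?S = "{p \<in> topspace (prod_topology T T). ?phi p \<in> V}"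
  have "openin (prod_topology T T) ?S"
    by (rule openin_continuous_map_preimage[OF c V(1)])
  then have op: "\<forall>x y. (x,y) \<in> ?S \<longrightarrow> (\<exists>U1 U2. openin T U1 \<and> openin T U2 \<and> x \<in> U1 \<and> y \<in> U2 \<and> U1 \<times> U2 \<subseteq> ?S)"
    by (simp only: openin_prod_topology_alt)
  have mem: "(y, y) \<in> ?S"
    using y g V(2) tsp by (simp add: G.l_inv)
  obtain U1 U2 where U: "openin T U1" "openin T U2" "y \<in> U1" "y \<in> U2"
     "U1 \<times> U2 \<subseteq> {p \<in> topspace (prod_topology T T). ?phi p \<in> V}"
    using op[rule_format, OF mem] by blast
  show ?thesis
  proof (intro exI conjI ballI)
    show "openin T (U1 \<inter> U2)" using U by auto
    show "y \<in> U1 \<inter> U2" using U by auto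
    fix a b assume "a \<in> U1 \<inter> U2" "b \<in> U1 \<inter> U2"
    then have "(a, b) \<in> U1 \<times> U2" by auto
    then show "inv\<^bsub>G\<^esub> ?k a \<otimes>\<^bsub>G\<^esub> ?k b \<in> V" using U(5) by auto
  qed
qed



lemma adj2_one: "adj2 (mat 1) = mat 1" by (simp add: m2simps)
lemma SL2_unip: "unipM s \<in> SL2" by (simp add: SL2_def m2simps)
lemma unipM_0: "unipM 0 = mat 1" by (simp add: m2simps)

lemma PSL_part:
  assumes Y: "Y \<in> SL2" and V: "openin PSL2_top V" "psl_class (mat 1) \<in> V"
  shows "\<exists>\<rho>>0. \<forall>A B s s'. A \<in> SL2 \<and> B \<in> SL2 \<and> dist A Y < \<rho> \<and> dist B Y < \<rho> \<and> \<bar>s\<bar> < \<rho> \<and> \<bar>s'\<bar> < \<rho> \<longrightarrow>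
     psl_class (adj2 (A ** unipM s ** adj2 A) ** (B ** unipM s' ** adj2 B)) \<in> V"
proof -
  let ?P = "{M \<in> SL2. psl_class M \<in> V}"
  have "openin (top_of_set SL2) ?P" using V(1) by (simp add: openin_PSL2)
  then obtain Op where Op: "open Op" "?P = SL2 \<inter> Op" by (auto simp: openin_open)
  have "mat 1 \<in> Op" using Op(2) V(2) SL2_one by auto
  then obtain e where e: "e > 0" "ball (mat 1) e \<subseteq> Op" using Op(1) open_contains_ball by blast
  define F where "F = (\<lambda>p::(mat2 \<times> real) \<times> (mat2 \<times> real).
     adj2 (fst (fst p) ** unipM (snd (fst p)) ** adj2 (fst (fst p))) ** (fst (snd p) ** unipM (snd (snd p)) ** adj2 (fst (snd p))))"
  define p0 where "p0 = ((Y, 0::real), (Y, 0::real))"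
  have Fp0: "F p0 = mat 1" using Y by (simp add: F_def p0_def unipM_0 adj2_r adj2_one)
  have "(F \<longlongrightarrow> F p0) (at p0)" unfolding F_def by (intro tendsto_intros)
  then have "eventually (\<lambda>p. dist (F p) (mat 1) < e) (at p0)" using e(1) Fp0 by (simp add: tendsto_iff)
  then obtain d where d: "d > 0" "\<And>p. p \<noteq> p0 \<Longrightarrow> dist p p0 < d \<Longrightarrow> dist (F p) (mat 1) < e"
    unfolding eventually_at by blast
  show ?thesis
  proof (intro exI[of _ "d/4"] conjI allI impI)
    show "d/4 > 0" using d by simp
    fix A B s s' assume H: "A \<in> SL2 \<and> B \<in> SL2 \<and> dist A Y < d/4 \<and> dist B Y < d/4 \<and> \<bar>s\<bar> < d/4 \<and> \<bar>s'\<bar> < d/4"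
    let ?p = "((A, s), (B, s'))"
    have "dist ?p p0 \<le> dist (A, s) (Y, 0::real) + dist (B, s') (Y, 0::real)"
      unfolding p0_def by (rule dist_pair_le)
    also have "\<dots> \<le> (dist A Y + dist s 0) + (dist B Y + dist s' 0)"
      by (intro add_mono dist_pair_le)
    also have "\<dots> < d" using H by (simp add: dist_real_def)
    finally have "dist ?p p0 < d" .
    then have "dist (F ?p) (mat 1) < e" using d(2)[of ?p] Fp0 e(1) by (cases "?p = p0") auto
    then have "F ?p \<in> Op" using e(2) by (auto simp: dist_commute)
    moreover have "F ?p \<in> SL2" using H unfolding F_def
      by (intro SL2_mult SL2_adj SL2_unip) auto
    ultimately have "F ?p \<in> ?P" using Op(2) by blast
    then show "psl_class (adj2 (A ** unipM s ** adj2 A) ** (B ** unipM s' ** adj2 B)) \<in> V"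
      by (simp add: F_def)
  qed
qed



definition diagM :: "real \<Rightarrow> mat2" where "diagM l = mat2_of l 0 0 (1/l)"

lemma SL2_diag: "l \<noteq> 0 \<Longrightarrow> diagM l \<in> SL2" by (simp add: SL2_def diagM_def m2simps)

lemma adj2_mult: "adj2 (X ** Y) = adj2 Y ** adj2 X"
  by (cases X rule: mat2_cases, cases Y rule: mat2_cases) (simp add: m2simps algebra_simps)

lemma inner_id:
  assumes "C \<in> SL2" "l \<noteq> 0"
  shows "adj2 (C ** diagM l) ** (C ** unipM t ** adj2 C) ** (C ** diagM l) = unipM (t / l^2)"
proof -
  have "adj2 (C ** diagM l) ** (C ** unipM t ** adj2 C) ** (C ** diagM l)
      = adj2 (diagM l) ** (adj2 C ** C) ** unipM t ** (adj2 C ** C) ** diagM l"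
    by (simp add: adj2_mult matrix_mul_assoc)
  also have "\<dots> = adj2 (diagM l) ** unipM t ** diagM l" using assms by (simp add: adj2_l)
  also have "\<dots> = unipM (t / l^2)" using assms(2)
    by (simp add: diagM_def m2simps field_simps power2_eq_square)
  finally show ?thesis .
qed

lemma conj_unip:
  assumes "A \<in> SL2"
  shows "A ** unipM s ** adj2 A = mat2_of (1 - s*(A$1$1)*(A$2$1)) (s*(A$1$1)^2) (-s*(A$2$1)^2) (1 + s*(A$1$1)*(A$2$1))"
proof -
  obtain a b c d where A: "A = mat2_of a b c d" by (rule mat2_cases)
  then have "a*d - b*c = 1" using assms by (simp add: SL2_def m2simps)
  then show ?thesis unfolding A by (simp add: m2simps algebra_simps power2_eq_square)
qed

lemma key_step:
  assumes gG: "group G" and sg: "subgroup \<Gamma> (Hgrp G)" and fg: "(f, g) \<in> \<Gamma>"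
    and f: "f = psl_class (C ** unipM t ** adj2 C)" and C: "C \<in> SL2" and l: "l \<noteq> 0"
    and A: "A \<in> SL2" and b: "b \<in> carrier G"
    and q: "\<Gamma> #>\<^bsub>Hgrp G\<^esub> (psl_class A, b) = \<Gamma> #>\<^bsub>Hgrp G\<^esub> (psl_class (C ** diagM l), \<one>\<^bsub>G\<^esub>)"
  shows "(psl_class (A ** unipM (t / l^2) ** adj2 A), b \<otimes>\<^bsub>G\<^esub> g \<otimes>\<^bsub>G\<^esub> inv\<^bsub>G\<^esub> b) \<in> \<Gamma>"
proof -
  interpret H: group "Hgrp G" by (rule group_Hgrp[OF gG])
  interpret G: group G by (rule gG)
  interpret P: group PSL2 by (rule group_PSL2)
  let ?w = "(psl_class A, b)"
  let ?h = "(psl_class (C ** diagM l), \<one>\<^bsub>G\<^esub>)"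
  have Gc: "\<Gamma> \<subseteq> carrier (Hgrp G)" using sg by (rule subgroup.subset)
  have CD: "C ** diagM l \<in> SL2" using C l by (simp add: SL2_mult SL2_diag)
  have wc: "?w \<in> carrier (Hgrp G)" using A b by (simp add: carrier_Hgrp carrier_PSL2)
  have hc: "?h \<in> carrier (Hgrp G)" using CD by (simp add: carrier_Hgrp carrier_PSL2)
  have fgc: "(f, g) \<in> carrier (Hgrp G)" using fg Gc by auto
  then have gc: "g \<in> carrier G" by (simp add: carrier_Hgrp)
  have "?w \<in> \<Gamma> #>\<^bsub>Hgrp G\<^esub> ?h" using H.rcos_self[OF wc sg] q by simp
  then obtain \<beta> where \<beta>: "\<beta> \<in> \<Gamma>" "?w = \<beta> \<otimes>\<^bsub>Hgrp G\<^esub> ?h" unfolding r_coset_def by auto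
  have \<beta>c: "\<beta> \<in> carrier (Hgrp G)" using \<beta> Gc by auto
  have \<beta>eq: "\<beta> = ?w \<otimes>\<^bsub>Hgrp G\<^esub> inv\<^bsub>Hgrp G\<^esub> ?h"
    using \<beta>(2) \<beta>c hc by (simp add: H.m_assoc)
  have "\<beta> \<otimes>\<^bsub>Hgrp G\<^esub> (f, g) \<otimes>\<^bsub>Hgrp G\<^esub> inv\<^bsub>Hgrp G\<^esub> \<beta> \<in> \<Gamma>"
    using \<beta>(1) fg sg by (intro subgroup.m_closed subgroup.m_inv_closed) auto
  also have "\<beta> \<otimes>\<^bsub>Hgrp G\<^esub> (f, g) \<otimes>\<^bsub>Hgrp G\<^esub> inv\<^bsub>Hgrp G\<^esub> \<beta> =
     ?w \<otimes>\<^bsub>Hgrp G\<^esub> (inv\<^bsub>Hgrp G\<^esub> ?h \<otimes>\<^bsub>Hgrp G\<^esub> (f, g) \<otimes>\<^bsub>Hgrp G\<^esub> ?h) \<otimes>\<^bsub>Hgrp G\<^esub> inv\<^bsub>Hgrp G\<^esub> ?w"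
    using wc hc fgc by (simp add: \<beta>eq H.inv_mult_group H.m_assoc)
  also have "\<dots> = (psl_class (A ** unipM (t / l^2) ** adj2 A), b \<otimes>\<^bsub>G\<^esub> g \<otimes>\<^bsub>G\<^esub> inv\<^bsub>G\<^esub> b)"
  proof -
    have i1: "inv\<^bsub>Hgrp G\<^esub> ?h = (psl_class (adj2 (C ** diagM l)), \<one>\<^bsub>G\<^esub>)"
      unfolding Hgrp_def using CD by (simp add: inv_DirProd[OF group_PSL2 gG] carrier_PSL2 psl_inv)
    have i2: "inv\<^bsub>Hgrp G\<^esub> ?w = (psl_class (adj2 A), inv\<^bsub>G\<^esub> b)"
      unfolding Hgrp_def using A b by (simp add: inv_DirProd[OF group_PSL2 gG] carrier_PSL2 psl_inv)
    have "psl_class A \<otimes>\<^bsub>PSL2\<^esub> (psl_class (adj2 (C ** diagM l)) \<otimes>\<^bsub>PSL2\<^esub> f \<otimes>\<^bsub>PSL2\<^esub> psl_class (C ** diagM l))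
           \<otimes>\<^bsub>PSL2\<^esub> psl_class (adj2 A)
        = psl_class (A ** (adj2 (C ** diagM l) ** (C ** unipM t ** adj2 C) ** (C ** diagM l)) ** adj2 A)"
      by (simp add: f psl_mult)
    also have "\<dots> = psl_class (A ** unipM (t / l^2) ** adj2 A)" by (simp add: inner_id C l)
    finally have e1: "psl_class A \<otimes>\<^bsub>PSL2\<^esub> (psl_class (adj2 (C ** diagM l)) \<otimes>\<^bsub>PSL2\<^esub> f \<otimes>\<^bsub>PSL2\<^esub> psl_class (C ** diagM l))
           \<otimes>\<^bsub>PSL2\<^esub> psl_class (adj2 A) = psl_class (A ** unipM (t / l^2) ** adj2 A)" .
    have e2: "b \<otimes>\<^bsub>G\<^esub> (\<one>\<^bsub>G\<^esub> \<otimes>\<^bsub>G\<^esub> g \<otimes>\<^bsub>G\<^esub> \<one>\<^bsub>G\<^esub>) \<otimes>\<^bsub>G\<^esub> inv\<^bsub>G\<^esub> b = b \<otimes>\<^bsub>G\<^esub> g \<otimes>\<^bsub>G\<^esub> inv\<^bsub>G\<^esub> b"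
      using gc by simp
    show ?thesis unfolding i1 i2 using e1 e2 by (simp add: Hgrp_def)
  qed
  finally show ?thesis .
qed



lemma small_s:
  fixes lam :: "nat \<Rightarrow> real" and r :: "nat \<Rightarrow> nat"
  assumes "\<forall>n. lam n > (1::real)" "filterlim lam at_top sequentially" "strict_mono r" "e > 0"
  shows "\<exists>N. \<forall>k\<ge>N. \<bar>t / (lam (r k))^2\<bar> < e"
proof -
  have "eventually (\<lambda>n. \<bar>t\<bar>/e + 1 \<le> lam n) sequentially"
    using assms(2) by (simp add: filterlim_at_top)
  then obtain N where N: "\<And>n. n \<ge> N \<Longrightarrow> \<bar>t\<bar>/e + 1 \<le> lam n" by (auto simp: eventually_sequentially)
  show ?thesis
  proof (intro exI allI impI)
    fix k assume "k \<ge> N"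
    then have "r k \<ge> N" using seq_suble[OF assms(3), of k] by linarith
    then have L: "\<bar>t\<bar>/e + 1 \<le> lam (r k)" by (rule N)
    define l where "l = lam (r k)"
    have l1: "l > 1" using assms(1) by (simp add: l_def)
    have "\<bar>t\<bar> < e * l" using L assms(4) unfolding l_def[symmetric] by (simp add: field_simps)
    have "\<bar>t / l^2\<bar> = \<bar>t\<bar> / l^2" by (simp add: abs_divide)
    also have "\<dots> \<le> \<bar>t\<bar> / l" using l1 by (intro divide_left_mono) (auto simp: power2_eq_square)
    also have "\<dots> < e" using \<open>\<bar>t\<bar> < e * l\<close> l1 by (simp add: field_simps)
    finally show "\<bar>t / (lam (r k))^2\<bar> < e" by (simp add: l_def)
  qed
qed

lemma entry_bound:
  fixes A Y :: mat2
  assumes "dist A Y < \<rho>"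
  shows "\<bar>A$i$j\<bar> \<le> norm Y + \<rho>"
proof -
  have "\<bar>A$i$j\<bar> \<le> norm (A$i)" by (rule component_le_norm_cart)
  also have "\<dots> \<le> norm A" by (rule Finite_Cartesian_Product.norm_nth_le)
  also have "\<dots> \<le> norm Y + norm (A - Y)" using norm_triangle_ineq[of Y "A - Y"] by simp
  also have "\<dots> \<le> norm Y + \<rho>" using assms by (simp add: dist_norm)
  finally show ?thesis .
qed

lemma dist_minus2: "dist (- Y) M = dist Y (- (M::mat2))"
  by (metis dist_minus minus_minus)

lemma W1_open: "openin PSL2_top (psl_class ` (ball Y \<rho> \<inter> SL2))"
proof -
  have eq: "{M \<in> SL2. psl_class M \<in> psl_class ` (ball Y \<rho> \<inter> SL2)} = SL2 \<inter> (ball Y \<rho> \<union> ball (-Y) \<rho>)"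
  proof (intro Set.set_eqI iffI)
    fix M assume "M \<in> {M \<in> SL2. psl_class M \<in> psl_class ` (ball Y \<rho> \<inter> SL2)}"
    then obtain A where "M \<in> SL2" "A \<in> ball Y \<rho>" "psl_class M = psl_class A" by auto
    then show "M \<in> SL2 \<inter> (ball Y \<rho> \<union> ball (-Y) \<rho>)"
      by (auto simp: psl_class_eq dist_minus dist_minus2)
  next
    fix M assume M: "M \<in> SL2 \<inter> (ball Y \<rho> \<union> ball (-Y) \<rho>)"
    show "M \<in> {M \<in> SL2. psl_class M \<in> psl_class ` (ball Y \<rho> \<inter> SL2)}"
    proof (cases "M \<in> ball Y \<rho>")
      case True then show ?thesis using M by auto
    next
      case False
      then have "- M \<in> ball Y \<rho>" "- M \<in> SL2" using M by (auto simp: dist_minus dist_minus2 SL2_neg)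
      moreover have "psl_class M = psl_class (- M)" by (simp add: psl_class_eq)
      ultimately show ?thesis using M by blast
    qed
  qed
  have "openin (top_of_set SL2) (SL2 \<inter> (ball Y \<rho> \<union> ball (-Y) \<rho>))"
    by (intro openin_open_Int open_Un open_ball)
  moreover have "psl_class ` (ball Y \<rho> \<inter> SL2) \<subseteq> carrier PSL2" by (auto simp: carrier_PSL2)
  ultimately show ?thesis unfolding openin_PSL2 eq by blast
qed



theorem mainTheorem6:
  fixes G :: "'g monoid" and T :: "'g topology" and \<Gamma> :: "(mat2 set \<times> 'g) set"
  assumes "lie_group G T" and "connected_space T"
    and "discrete_subgroup (Hgrp G) (Htop T) \<Gamma>"
    and "\<exists>\<gamma>\<in>\<Gamma>. semi_parabolic G \<gamma>"
  shows "\<exists>x\<in>Xspace G \<Gamma>. \<forall>lam :: nat \<Rightarrow> real.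
           (\<forall>n. lam n > 1) \<and> filterlim lam at_top sequentially \<longrightarrow>
           \<not> (\<exists>r y. strict_mono r \<and>
                limitin (Xtop G T \<Gamma>) (\<lambda>k. Xact G x (psl_diag (lam (r k)))) y sequentially)"
proof -
  have tg: "topological_group G T" using assms(1) by (simp add: lie_group_def)
  have gG: "group G" using tg by (simp add: topological_group_def)
  have tspT: "topspace T = carrier G" using tg by (simp add: topological_group_def)
  interpret H: group "Hgrp G" by (rule group_Hgrp[OF gG])
  interpret G: group G by (rule gG)
  interpret P: group PSL2 by (rule group_PSL2)
  have sg: "subgroup \<Gamma> (Hgrp G)" and disc: "\<forall>\<gamma>\<in>\<Gamma>. \<exists>V. openin (Htop T) V \<and> V \<inter> \<Gamma> = {\<gamma>}"
    using assms(3) by (auto simp: discrete_subgroup_def)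
  have Gc: "\<Gamma> \<subseteq> carrier (Hgrp G)" using sg by (rule subgroup.subset)
  obtain f g where fg: "(f, g) \<in> \<Gamma>" "semi_parabolic G (f, g)" using assms(4) by auto
  then obtain c u where cu: "c \<in> carrier PSL2" "u \<in> U_group" "u \<noteq> \<one>\<^bsub>PSL2\<^esub>"
      "f = c \<otimes>\<^bsub>PSL2\<^esub> u \<otimes>\<^bsub>PSL2\<^esub> inv\<^bsub>PSL2\<^esub> c"
    by (auto simp: semi_parabolic_def)
  obtain C where C: "C \<in> SL2" "c = psl_class C" using cu(1) by (auto simp: carrier_PSL2)
  obtain t where t: "u = psl_class (unipM t)" using cu(2) by (auto simp: U_group_def psl_unip_def unipM_def)
  have t0: "t \<noteq> 0"
  proof
    assume "t = 0"
    then have "u = \<one>\<^bsub>PSL2\<^esub>" using t by (simp add: one_PSL2 unipM_0)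
    then show False using cu(3) by simp
  qed
  have f: "f = psl_class (C ** unipM t ** adj2 C)"
    using cu(4) C t by (simp add: psl_inv psl_mult)
  have gc: "g \<in> carrier G" using fg(1) Gc by (auto simp: carrier_Hgrp)
  let ?q = "\<lambda>h. \<Gamma> #>\<^bsub>Hgrp G\<^esub> h"
  define x where "x = ?q (c, \<one>\<^bsub>G\<^esub>)"
  have c1: "(c, \<one>\<^bsub>G\<^esub>) \<in> carrier (Hgrp G)" using cu(1) by (simp add: carrier_Hgrp)
  show ?thesis
  proof (intro bexI[of _ x] allI impI notI)
    show "x \<in> Xspace G \<Gamma>" using c1 by (simp add: Xspace_def x_def)
  next
    fix lam :: "nat \<Rightarrow> real"
    assume lam: "(\<forall>n. lam n > 1) \<and> filterlim lam at_top sequentially"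
    assume "\<exists>r y. strict_mono r \<and> limitin (Xtop G T \<Gamma>) (\<lambda>k. Xact G x (psl_diag (lam (r k)))) y sequentially"
    then obtain r y where r: "strict_mono r"
      and lim: "limitin (Xtop G T \<Gamma>) (\<lambda>k. Xact G x (psl_diag (lam (r k)))) y sequentially" by blast
    define l where "l k = lam (r k)" for k
    define s where "s k = t / (l k)^2" for k
    have l1: "l k > 1" for k using lam by (simp add: l_def)
    have ls: "\<exists>N. \<forall>k\<ge>N. \<bar>s k\<bar> < e" if "e > 0" for e
      using small_s[of lam r e t] lam r that by (simp add: s_def l_def)
    have Xact_eq: "Xact G x (psl_diag (l k)) = ?q (psl_class (C ** diagM (l k)), \<one>\<^bsub>G\<^esub>)" for k
    proof -
      have dc: "(psl_diag (l k), \<one>\<^bsub>G\<^esub>) \<in> carrier (Hgrp G)"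
        using l1[of k] by (simp add: carrier_Hgrp carrier_PSL2 psl_diag_def SL2_diag[unfolded diagM_def])
      have "Xact G x (psl_diag (l k)) = ?q ((c, \<one>\<^bsub>G\<^esub>) \<otimes>\<^bsub>Hgrp G\<^esub> (psl_diag (l k), \<one>\<^bsub>G\<^esub>))"
        unfolding Xact_def x_def by (rule H.coset_mult_assoc[OF Gc c1 dc])
      also have "\<dots> = ?q (psl_class (C ** diagM (l k)), \<one>\<^bsub>G\<^esub>)"
        by (simp add: Hgrp_def C psl_diag_def diagM_def psl_mult)
      finally show ?thesis .
    qed
    have ytop: "y \<in> topspace (Xtop G T \<Gamma>)" using lim by (simp add: limitin_sequentially)
    then obtain y1 y2 where y: "y = ?q (y1, y2)" "y1 \<in> carrier PSL2" "y2 \<in> carrier G"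
      by (auto simp: topspace_Xtop topspace_Htop[OF tg] carrier_Hgrp)
    obtain Y1 where Y1: "Y1 \<in> SL2" "y1 = psl_class Y1" using y(2) by (auto simp: carrier_PSL2)
    have one_in: "\<one>\<^bsub>Hgrp G\<^esub> \<in> \<Gamma>" using sg by (rule subgroup.one_closed)
    obtain V where V: "openin (Htop T) V" "V \<inter> \<Gamma> = {\<one>\<^bsub>Hgrp G\<^esub>}" using disc one_in by blast
    have oneH: "\<one>\<^bsub>Hgrp G\<^esub> = (psl_class (mat 1), \<one>\<^bsub>G\<^esub>)" by (simp add: Hgrp_def one_PSL2)
    have opV: "\<forall>a b. (a, b) \<in> V \<longrightarrow> (\<exists>U1 U2. openin PSL2_top U1 \<and> openin T U2 \<and> a \<in> U1 \<and> b \<in> U2 \<and> U1 \<times> U2 \<subseteq> V)"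
      using V(1) unfolding Htop_def by (simp only: openin_prod_topology_alt)
    have "(psl_class (mat 1), \<one>\<^bsub>G\<^esub>) \<in> V" using V(2) oneH by auto
    from opV[rule_format, OF this] obtain V1 V2 where V12: "openin PSL2_top V1" "openin T V2"
      "psl_class (mat 1) \<in> V1" "\<one>\<^bsub>G\<^esub> \<in> V2" "V1 \<times> V2 \<subseteq> V" by blast
    obtain \<rho> where \<rho>: "\<rho> > 0" "\<And>A B s s'. A \<in> SL2 \<Longrightarrow> B \<in> SL2 \<Longrightarrow> dist A Y1 < \<rho> \<Longrightarrow> dist B Y1 < \<rho> \<Longrightarrow>
        \<bar>s\<bar> < \<rho> \<Longrightarrow> \<bar>s'\<bar> < \<rho> \<Longrightarrow>
        psl_class (adj2 (A ** unipM s ** adj2 A) ** (B ** unipM s' ** adj2 B)) \<in> V1"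
      using PSL_part[OF Y1(1) V12(1) V12(3)] by blast
    obtain W2 where W2: "openin T W2" "y2 \<in> W2" "\<And>a b. a \<in> W2 \<Longrightarrow> b \<in> W2 \<Longrightarrow>
       inv\<^bsub>G\<^esub> (a \<otimes>\<^bsub>G\<^esub> g \<otimes>\<^bsub>G\<^esub> inv\<^bsub>G\<^esub> a) \<otimes>\<^bsub>G\<^esub> (b \<otimes>\<^bsub>G\<^esub> g \<otimes>\<^bsub>G\<^esub> inv\<^bsub>G\<^esub> b) \<in> V2"
      using G_part[OF tg gc y(3) V12(2) V12(4)] by blast
    have W2c: "W2 \<subseteq> carrier G" using openin_subset[OF W2(1)] tspT by simp
    define W1 where "W1 = psl_class ` (ball Y1 \<rho> \<inter> SL2)"
    have W1o: "openin PSL2_top W1" unfolding W1_def by (rule W1_open)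
    have Wo: "openin (Htop T) (W1 \<times> W2)" unfolding Htop_def using W1o W2(1) by (simp add: openin_prod_Times_iff)
    have "(y1, y2) \<in> W1 \<times> W2" unfolding W1_def using Y1 W2(2) \<rho>(1) by auto
    then have yW: "y \<in> ?q ` (W1 \<times> W2)" using y(1) by blast
    have qWo: "openin (Xtop G T \<Gamma>) (?q ` (W1 \<times> W2))" by (rule openin_X[OF tg sg Wo])
    obtain N1 where N1: "\<And>k. k \<ge> N1 \<Longrightarrow> Xact G x (psl_diag (lam (r k))) \<in> ?q ` (W1 \<times> W2)"
      using lim qWo yW unfolding limitin_sequentially by blast
    obtain N2 where N2: "\<And>k. k \<ge> N2 \<Longrightarrow> \<bar>s k\<bar> < \<rho>" using ls[OF \<rho>(1)] by blast
    define N where "N = max N1 N2"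
    have step: "\<exists>A b. A \<in> SL2 \<and> dist A Y1 < \<rho> \<and> b \<in> W2 \<and>
        (psl_class (A ** unipM (s k) ** adj2 A), b \<otimes>\<^bsub>G\<^esub> g \<otimes>\<^bsub>G\<^esub> inv\<^bsub>G\<^esub> b) \<in> \<Gamma>" if "k \<ge> N" for k
    proof -
      have "Xact G x (psl_diag (l k)) \<in> ?q ` (W1 \<times> W2)" using N1[of k] that by (simp add: N_def l_def)
      then obtain A b where Ab: "A \<in> ball Y1 \<rho> \<inter> SL2" "b \<in> W2"
        "?q (psl_class A, b) = ?q (psl_class (C ** diagM (l k)), \<one>\<^bsub>G\<^esub>)"
        unfolding Xact_eq W1_def by auto
      have "(psl_class (A ** unipM (t / (l k)^2) ** adj2 A), b \<otimes>\<^bsub>G\<^esub> g \<otimes>\<^bsub>G\<^esub> inv\<^bsub>G\<^esub> b) \<in> \<Gamma>"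
        using l1[of k] Ab W2c
        by (intro key_step[OF gG sg fg(1) f C(1)]) auto
      then show ?thesis using Ab by (auto simp: s_def dist_commute)
    qed
    then obtain Af bf where Abf: "\<And>k. k \<ge> N \<Longrightarrow> Af k \<in> SL2 \<and> dist (Af k) Y1 < \<rho> \<and> bf k \<in> W2 \<and>
        (psl_class (Af k ** unipM (s k) ** adj2 (Af k)), bf k \<otimes>\<^bsub>G\<^esub> g \<otimes>\<^bsub>G\<^esub> inv\<^bsub>G\<^esub> bf k) \<in> \<Gamma>"
    proof -
      have "\<forall>k. \<exists>A. \<exists>b. k \<ge> N \<longrightarrow> A \<in> SL2 \<and> dist A Y1 < \<rho> \<and> b \<in> W2 \<and>
        (psl_class (A ** unipM (s k) ** adj2 A), b \<otimes>\<^bsub>G\<^esub> g \<otimes>\<^bsub>G\<^esub> inv\<^bsub>G\<^esub> b) \<in> \<Gamma>"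
        using step by blast
      then obtain Af where "\<forall>k. \<exists>b. k \<ge> N \<longrightarrow> Af k \<in> SL2 \<and> dist (Af k) Y1 < \<rho> \<and> b \<in> W2 \<and>
        (psl_class (Af k ** unipM (s k) ** adj2 (Af k)), b \<otimes>\<^bsub>G\<^esub> g \<otimes>\<^bsub>G\<^esub> inv\<^bsub>G\<^esub> b) \<in> \<Gamma>"
        using choice[of "\<lambda>k A. \<exists>b. k \<ge> N \<longrightarrow> A \<in> SL2 \<and> dist A Y1 < \<rho> \<and> b \<in> W2 \<and>
        (psl_class (A ** unipM (s k) ** adj2 A), b \<otimes>\<^bsub>G\<^esub> g \<otimes>\<^bsub>G\<^esub> inv\<^bsub>G\<^esub> b) \<in> \<Gamma>"] by blast
      then obtain bf where "\<forall>k. k \<ge> N \<longrightarrow> Af k \<in> SL2 \<and> dist (Af k) Y1 < \<rho> \<and> bf k \<in> W2 \<and>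
        (psl_class (Af k ** unipM (s k) ** adj2 (Af k)), bf k \<otimes>\<^bsub>G\<^esub> g \<otimes>\<^bsub>G\<^esub> inv\<^bsub>G\<^esub> bf k) \<in> \<Gamma>"
        using choice[of "\<lambda>k b. k \<ge> N \<longrightarrow> Af k \<in> SL2 \<and> dist (Af k) Y1 < \<rho> \<and> b \<in> W2 \<and>
        (psl_class (Af k ** unipM (s k) ** adj2 (Af k)), b \<otimes>\<^bsub>G\<^esub> g \<otimes>\<^bsub>G\<^esub> inv\<^bsub>G\<^esub> b) \<in> \<Gamma>"] by blast
      then show ?thesis using that by blast
    qed
    define M where "M k = Af k ** unipM (s k) ** adj2 (Af k)" for k
    have MSL: "M k \<in> SL2" if "k \<ge> N" for k
      using Abf[OF that] unfolding M_def by (intro SL2_mult SL2_adj SL2_unip) auto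
    have Mclass: "psl_class (M k) = psl_class (M N)" if "k \<ge> N" for k
    proof -
      define d where "d j = (psl_class (M j), bf j \<otimes>\<^bsub>G\<^esub> g \<otimes>\<^bsub>G\<^esub> inv\<^bsub>G\<^esub> bf j)" for j
      have dG: "d j \<in> \<Gamma>" if "j \<ge> N" for j using Abf[OF that] by (simp add: d_def M_def)
      have dc: "d j \<in> carrier (Hgrp G)" if "j \<ge> N" for j using dG[OF that] Gc by auto
      have bc: "bf j \<in> carrier G" if "j \<ge> N" for j using Abf[OF that] W2c by auto
      let ?z = "inv\<^bsub>Hgrp G\<^esub> d N \<otimes>\<^bsub>Hgrp G\<^esub> d k"
      have zG: "?z \<in> \<Gamma>" using dG[of N] dG[OF that] sg
        by (intro subgroup.m_closed subgroup.m_inv_closed) auto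
      have zeq: "?z = (psl_class (adj2 (M N) ** M k),
          inv\<^bsub>G\<^esub> (bf N \<otimes>\<^bsub>G\<^esub> g \<otimes>\<^bsub>G\<^esub> inv\<^bsub>G\<^esub> bf N) \<otimes>\<^bsub>G\<^esub> (bf k \<otimes>\<^bsub>G\<^esub> g \<otimes>\<^bsub>G\<^esub> inv\<^bsub>G\<^esub> bf k))"
        using MSL[of N] bc[of N] gc
        by (simp add: d_def Hgrp_def inv_DirProd[OF group_PSL2 gG] carrier_PSL2 psl_inv psl_mult)
      have "psl_class (adj2 (M N) ** M k) \<in> V1"
        unfolding M_def using Abf[of N] Abf[OF that] N2[of N] N2[of k] that
        by (intro \<rho>(2)) (auto simp: N_def)
      moreover have "inv\<^bsub>G\<^esub> (bf N \<otimes>\<^bsub>G\<^esub> g \<otimes>\<^bsub>G\<^esub> inv\<^bsub>G\<^esub> bf N) \<otimes>\<^bsub>G\<^esub> (bf k \<otimes>\<^bsub>G\<^esub> g \<otimes>\<^bsub>G\<^esub> inv\<^bsub>G\<^esub> bf k) \<in> V2"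
        using Abf[of N] Abf[OF that] by (intro W2(3)) auto
      ultimately have "?z \<in> V" using V12(5) zeq by auto
      then have "?z = \<one>\<^bsub>Hgrp G\<^esub>" using zG V(2) by auto
      moreover have "d N \<otimes>\<^bsub>Hgrp G\<^esub> ?z = d k"
        using dc[of N] dc[OF that] by (simp add: H.m_assoc[symmetric])
      ultimately have "d k = d N" using dc[of N] by simp
      then show ?thesis by (simp add: d_def)
    qed
    define a where "a k = Af k $ 1 $ 1" for k
    define cc where "cc k = Af k $ 2 $ 1" for k
    have Mform: "M k = mat2_of (1 - s k * a k * cc k) (s k * (a k)^2) (- s k * (cc k)^2) (1 + s k * a k * cc k)"
      if "k \<ge> N" for k
      using Abf[OF that] unfolding M_def a_def cc_def by (intro conj_unip) auto
    have Meq: "M k = M N" if "k \<ge> N" for k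
    proof -
      have "M k = M N \<or> M k = - M N" using Mclass[OF that] unfolding psl_class_eq by (metis minus_minus)
      moreover have "M k \<noteq> - M N"
      proof
        assume "M k = - M N"
        then show False using Mform[OF that] Mform[of N] by (simp add: m2simps, elim conjE, linarith)
      qed
      ultimately show ?thesis by blast
    qed
    have ent: "s k * (a k)^2 = s N * (a N)^2 \<and> s k * (cc k)^2 = s N * (cc N)^2" if "k \<ge> N" for k
      using Meq[OF that] Mform[OF that] Mform[of N] by (simp add: m2simps)
    have sN: "s N \<noteq> 0" using t0 l1[of N] by (simp add: s_def)
    have acN: "(a N)^2 + (cc N)^2 > 0"
    proof -
      have "det (Af N) = 1" using Abf[of N] by (simp add: SL2_def)
      then have "a N \<noteq> 0 \<or> cc N \<noteq> 0" by (auto simp: det_2 a_def cc_def)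
      then show ?thesis by (auto simp: add_pos_nonneg add_nonneg_pos)
    qed
    define m where "m = \<bar>s N\<bar> * ((a N)^2 + (cc N)^2)"
    have m0: "m > 0" using sN acN by (simp add: m_def)
    define B0 where "B0 = norm Y1 + \<rho>"
    have bnd: "(a k)^2 + (cc k)^2 \<le> 2 * B0^2" if "k \<ge> N" for k
    proof -
      have d: "dist (Af k) Y1 < \<rho>" using Abf[OF that] by auto
      have "\<bar>a k\<bar> \<le> B0" "\<bar>cc k\<bar> \<le> B0" unfolding a_def cc_def B0_def using entry_bound[OF d] by auto
      then have "(a k)^2 \<le> B0^2" "(cc k)^2 \<le> B0^2"
        by (auto simp: abs_le_square_iff[symmetric] abs_le_iff)
      then show ?thesis by simp
    qed
    define e where "e = m / (2 * B0^2 + 1)"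
    have e0: "e > 0" using m0 by (simp add: e_def add_nonneg_pos)
    obtain N3 where N3: "\<And>k. k \<ge> N3 \<Longrightarrow> \<bar>s k\<bar> < e" using ls[OF e0] by blast
    define k where "k = max N N3"
    have kN: "k \<ge> N" and sk: "\<bar>s k\<bar> < e" using N3[of k] by (auto simp: k_def)
    have ab: "\<bar>x\<bar> * (z::real)^2 = \<bar>x * z^2\<bar>" for x z by (simp add: abs_mult)
    have "m = \<bar>s N * (a N)^2\<bar> + \<bar>s N * (cc N)^2\<bar>" by (simp add: m_def distrib_left ab)
    also have "\<dots> = \<bar>s k * (a k)^2\<bar> + \<bar>s k * (cc k)^2\<bar>" using ent[OF kN] by simp
    also have "\<dots> = \<bar>s k\<bar> * ((a k)^2 + (cc k)^2)" by (simp add: distrib_left ab)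
    finally have "m = \<bar>s k\<bar> * ((a k)^2 + (cc k)^2)" .
    also have "\<dots> \<le> \<bar>s k\<bar> * (2 * B0^2)" using bnd[OF kN] by (intro mult_left_mono) auto
    also have "\<dots> \<le> \<bar>s k\<bar> * (2 * B0^2 + 1)" by (intro mult_left_mono) auto
    also have "\<dots> < e * (2 * B0^2 + 1)" using sk by (intro mult_strict_right_mono) (auto simp: add_nonneg_pos)
    also have "\<dots> = m"
    proof -
      have "2 * B0^2 + 1 > 0" by (simp add: add_nonneg_pos)
      then show ?thesis by (simp add: e_def)
    qed
    finally show False by simp
  qed
qed

end
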